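(* Let $\mathcal A_r^\Pi=\{\mathcal O\in\mathcal A_r:[\mathcal O,\Pi_{GI}]=0\}$ and $\hat{\mathcal A}_r^\Pi=\{\hat{\mathcal O}\in\hat{\mathcal A}_r:[\hat{\mathcal O},\Pi_{GI}]=0\}$. Then $$\mathcal A_r^\Pi\,\Pi_{GI}=\hat{\mathcal A}_r^\Pi\,\Pi_{GI},$$ where $\mathcal X\Pi_{GI}$ denotes $\{X\Pi_{GI}:X\in\mathcal X\}$.
   Context: Setup. Let $G$ be a compact Lie group (possibly finite) with normalized Haar measure $dg$ ($\int dg=1$). Let $\Lambda=(V,E)$ be a finite directed graph; loops and multiple edges are allowed. Each edge $e$ carries $\mathcal H_e=L^2(G)$ with unitaries $L_e(g)|h\rangle_e=|gh\rangle_e$ and $R_e(g^{-1})|h\rangle_e=|hg^{-1}\rangle_e$. Each vertex $v$ carries a Hilbert space $\mathcal H_v$ with a unitary representation $U_v$ of $G$. All these spaces are taken finite-dimensional by truncating to finitely many irreducible isotypic sectors, which are invariant under the group actions. The pre-gauged space is $\mathcal H=\bigotimes_v\mathcal H_v\otimes\bigotimes_e\mathcal H_e$, with $\mathcal A=\mathcal B(\mathcal H)$. The gauge transformation at $v$ is $A_v(g)=U_v(g)\prod_{e\in E^-(v)}L_e(g)\prod_{e\in E^+(v)}R_e(g^{-1})$, where $E^-(v)$ is the set of edges oriented out of $v$ and $E^+(v)$ the set of edges oriented into $v$. Set $\Pi_v=\int dg\,A_v(g)$; these are mutually commuting orthogonal projections. Set $\Pi_{GI}=\prod_v\Pi_v$.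 Subregions. A subregion $r$ is an arbitrary subset of $V\cup E$, and $\bar r$ is its complement. Let $\mathcal H_r=\bigotimes_{x\in r}\mathcal H_x$ and $\mathcal A_r=\mathcal B(\mathcal H_r)\otimes 1_{\bar r}$. Let $V_r$ be the set of vertices $v$ such that $v$ and all edges incident to $v$ lie in $r$, and put $\Pi_{V_r}=\prod_{v\in V_r}\Pi_v$; this is an operator in $\mathcal A_r$. The partially gauged algebra is $\hat{\mathcal A}_r=\{\Pi_{V_r}\mathcal O\Pi_{V_r}:\mathcal O\in\mathcal A_r\}$, i.e. the operators on $\hat{\mathcal H}_r=\Pi_{V_r}\mathcal H_r$ tensored with $1_{\bar r}$. *)

theory Defs
  imports "HOL-Probability.Probability" "HOL-Algebra.Group"
begin

text \<open>A local operator on a site of dimension n is a function nat => nat => complex,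
  only its entries with indices below n matter.\<close>

definition kd :: "nat \<Rightarrow> nat \<Rightarrow> complex" where
  "kd i j = (if i = j then 1 else 0)"

definition matmul :: "nat \<Rightarrow> (nat \<Rightarrow> nat \<Rightarrow> complex) \<Rightarrow> (nat \<Rightarrow> nat \<Rightarrow> complex)
    \<Rightarrow> (nat \<Rightarrow> nat \<Rightarrow> complex)" where
  "matmul n A B = (\<lambda>i j. \<Sum>k<n. A i k * B k j)"

definition is_unitary :: "nat \<Rightarrow> (nat \<Rightarrow> nat \<Rightarrow> complex) \<Rightarrow> bool" where
  "is_unitary n A \<longleftrightarrow> (\<forall>i<n. \<forall>j<n. (\<Sum>k<n. cnj (A k i) * A k j) = kd i j)"

definition unitary_rep ::
  "('g, 'b) monoid_scheme \<Rightarrow> 'g measure \<Rightarrow> nat \<Rightarrow> ('g \<Rightarrow> nat \<Rightarrow> nat \<Rightarrow> complex) \<Rightarrow> bool" where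
  "unitary_rep G M n U \<longleftrightarrow>
     (\<forall>g\<in>carrier G. is_unitary n (U g)) \<and>
     (\<forall>g\<in>carrier G. \<forall>h\<in>carrier G. \<forall>i<n. \<forall>j<n.
         U (g \<otimes>\<^bsub>G\<^esub> h) i j = matmul n (U g) (U h) i j) \<and>
     (\<forall>i<n. \<forall>j<n. U \<one>\<^bsub>G\<^esub> i j = kd i j) \<and>
     (\<forall>i j. (\<lambda>g. U g i j) \<in> borel_measurable M)"

definition haar_prob :: "('g, 'b) monoid_scheme \<Rightarrow> 'g measure \<Rightarrow> bool" where
  "haar_prob G M \<longleftrightarrow> prob_space M \<and> space M = carrier G \<and>
     (\<forall>g\<in>carrier G. (\<lambda>h. g \<otimes>\<^bsub>G\<^esub> h) \<in> M \<rightarrow>\<^sub>M M \<and> distr M M (\<lambda>h. g \<otimes>\<^bsub>G\<^esub> h) = M) \<and>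
     (\<forall>g\<in>carrier G. (\<lambda>h. h \<otimes>\<^bsub>G\<^esub> g) \<in> M \<rightarrow>\<^sub>M M \<and> distr M M (\<lambda>h. h \<otimes>\<^bsub>G\<^esub> g) = M)"

text \<open>The basis of the tensor product of the
  site spaces over a finite set S of sites, site x having dimension d x, is the set of
  configurations c with c x < d x on S and c x = 0 off S.\<close>

definition sites :: "'v set \<Rightarrow> 'e set \<Rightarrow> ('v + 'e) set" where
  "sites V E = Inl ` V \<union> Inr ` E"

definition cfgs :: "'s set \<Rightarrow> ('s \<Rightarrow> nat) \<Rightarrow> ('s \<Rightarrow> nat) set" where
  "cfgs S d = {c. (\<forall>x\<in>S. c x < d x) \<and> (\<forall>x. x \<notin> S \<longrightarrow> c x = 0)}"

type_synonym 's op = "('s \<Rightarrow> nat) \<Rightarrow> ('s \<Rightarrow> nat) \<Rightarrow> complex"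

text \<open>Operators on H are matrices indexed by configurations, vanishing off the basis.\<close>
definition is_op :: "'s set \<Rightarrow> ('s \<Rightarrow> nat) \<Rightarrow> 's op \<Rightarrow> bool" where
  "is_op S d A \<longleftrightarrow> (\<forall>c c'. c \<notin> cfgs S d \<or> c' \<notin> cfgs S d \<longrightarrow> A c c' = 0)"

definition opmult :: "'s set \<Rightarrow> ('s \<Rightarrow> nat) \<Rightarrow> 's op \<Rightarrow> 's op \<Rightarrow> 's op" where
  "opmult S d A B = (\<lambda>c c'. \<Sum>b\<in>cfgs S d. A c b * B b c')"

definition opid :: "'s set \<Rightarrow> ('s \<Rightarrow> nat) \<Rightarrow> 's op" where
  "opid S d = (\<lambda>c c'. if c \<in> cfgs S d \<and> c = c' then 1 else 0)"

primrec oprod :: "'s set \<Rightarrow> ('s \<Rightarrow> nat) \<Rightarrow> 's op list \<Rightarrow> 's op" where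
  "oprod S d [] = opid S d"
| "oprod S d (P # Ps) = opmult S d P (oprod S d Ps)"

definition tensor :: "'s set \<Rightarrow> ('s \<Rightarrow> nat) \<Rightarrow> ('s \<Rightarrow> nat \<Rightarrow> nat \<Rightarrow> complex) \<Rightarrow> 's op" where
  "tensor S d M = (\<lambda>c c'. if c \<in> cfgs S d \<and> c' \<in> cfgs S d
                           then (\<Prod>x\<in>S. M x (c x) (c' x)) else 0)"

definition restr :: "('s \<Rightarrow> nat) \<Rightarrow> 's set \<Rightarrow> ('s \<Rightarrow> nat)" where
  "restr c r = (\<lambda>x. if x \<in> r then c x else 0)"

text \<open>The algebra A_r = B(H_r) tensor 1 on the complement of r.\<close>
definition local_alg :: "'s set \<Rightarrow> ('s \<Rightarrow> nat) \<Rightarrow> 's set \<Rightarrow> 's op set" where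
  "local_alg S d r = {A. \<exists>Ar. A = (\<lambda>c c'.
       if c \<in> cfgs S d \<and> c' \<in> cfgs S d \<and> (\<forall>x\<in>S - r. c x = c' x)
       then Ar (restr c r) (restr c' r) else 0)}"

text \<open>For an edge e: L_e(g) if e leaves v, times Rh e g = R_e(g^{-1}) if e enters v
  (both for a loop at v), identity otherwise.\<close>
definition gauge_local ::
  "('e \<Rightarrow> 'v) \<Rightarrow> ('e \<Rightarrow> 'v) \<Rightarrow> ('v + 'e \<Rightarrow> nat) \<Rightarrow>
   ('v \<Rightarrow> 'g \<Rightarrow> nat \<Rightarrow> nat \<Rightarrow> complex) \<Rightarrow> ('e \<Rightarrow> 'g \<Rightarrow> nat \<Rightarrow> nat \<Rightarrow> complex) \<Rightarrow>
   ('e \<Rightarrow> 'g \<Rightarrow> nat \<Rightarrow> nat \<Rightarrow> complex) \<Rightarrow> 'v \<Rightarrow> 'g \<Rightarrow> ('v + 'e) \<Rightarrow> nat \<Rightarrow> nat \<Rightarrow> complex" where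
  "gauge_local src tgt d U L Rh v g x =
     (case x of
        Inl w \<Rightarrow> (if w = v then U w g else kd)
      | Inr e \<Rightarrow> matmul (d x) (if src e = v then L e g else kd)
                              (if tgt e = v then Rh e g else kd))"

definition gauge_op where
  "gauge_op V E src tgt d U L Rh v g =
     tensor (sites V E) d (gauge_local src tgt d U L Rh v g)"

definition Pi_v :: "'g measure \<Rightarrow> 'v set \<Rightarrow> 'e set \<Rightarrow> ('e \<Rightarrow> 'v) \<Rightarrow> ('e \<Rightarrow> 'v) \<Rightarrow>
   ('v + 'e \<Rightarrow> nat) \<Rightarrow> ('v \<Rightarrow> 'g \<Rightarrow> nat \<Rightarrow> nat \<Rightarrow> complex) \<Rightarrow> ('e \<Rightarrow> 'g \<Rightarrow> nat \<Rightarrow> nat \<Rightarrow> complex) \<Rightarrow>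
   ('e \<Rightarrow> 'g \<Rightarrow> nat \<Rightarrow> nat \<Rightarrow> complex) \<Rightarrow> 'v \<Rightarrow> ('v + 'e) op" where
  "Pi_v M V E src tgt d U L Rh v =
     (\<lambda>c c'. LINT g|M. gauge_op V E src tgt d U L Rh v g c c')"

definition V_r :: "'v set \<Rightarrow> 'e set \<Rightarrow> ('e \<Rightarrow> 'v) \<Rightarrow> ('e \<Rightarrow> 'v) \<Rightarrow> ('v + 'e) set \<Rightarrow> 'v set" where
  "V_r V E src tgt r = {v \<in> V. Inl v \<in> r \<and> (\<forall>e\<in>E. (src e = v \<or> tgt e = v) \<longrightarrow> Inr e \<in> r)}"

end

theory Submission
  imports Defs
begin


lemma finite_cfgs: "finite S \<Longrightarrow> finite (cfgs S d)"
proof -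
  assume fS: "finite S"
  have "cfgs S d \<subseteq> {f. \<forall>x. (x \<in> S \<longrightarrow> f x \<in> {..<Max (d ` S)}) \<and> (x \<notin> S \<longrightarrow> f x = 0)}"
  proof
    fix c assume c: "c \<in> cfgs S d"
    have "\<forall>x\<in>S. c x < Max (d ` S)"
      using c fS by (auto simp: cfgs_def intro: less_le_trans[OF _ Max_ge])
    then show "c \<in> {f. \<forall>x. (x \<in> S \<longrightarrow> f x \<in> {..<Max (d ` S)}) \<and> (x \<notin> S \<longrightarrow> f x = 0)}"
      using c by (auto simp: cfgs_def)
  qed
  then show ?thesis using finite_set_of_finite_funs[OF fS, of "{..<Max (d ` S)}" 0]
    by (auto intro: finite_subset)
qed

lemma sum_cfgs_prod:
  assumes fS: "finite S"
  shows "(\<Sum>b\<in>cfgs S d. \<Prod>x\<in>S. f x (b x)) = (\<Prod>x\<in>S. \<Sum>k<d x. (f x k :: complex))"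
proof -
  have "(\<Prod>x\<in>S. \<Sum>k<d x. f x k) = (\<Sum>g\<in>PiE S (\<lambda>x. {..<d x}). \<Prod>x\<in>S. f x (g x))"
    by (rule prod_sum_PiE) (use fS in auto)
  also have "\<dots> = (\<Sum>b\<in>cfgs S d. \<Prod>x\<in>S. f x (b x))"
    by (rule sum.reindex_bij_witness[of _ "\<lambda>b. restrict b S" "\<lambda>g x. if x \<in> S then g x else 0"])
       (auto simp: cfgs_def PiE_def extensional_def intro!: prod.cong)
  finally show ?thesis by simp
qed

lemma opmult_assoc: "opmult S d (opmult S d A B) C = opmult S d A (opmult S d B C)"
proof (rule ext, rule ext)
  fix c c'
  have "opmult S d (opmult S d A B) C c c' = (\<Sum>b\<in>cfgs S d. \<Sum>k\<in>cfgs S d. A c k * B k b * C b c')"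
    by (simp add: opmult_def sum_distrib_right)
  also have "\<dots> = (\<Sum>k\<in>cfgs S d. \<Sum>b\<in>cfgs S d. A c k * B k b * C b c')"
    by (rule sum.swap)
  also have "\<dots> = opmult S d A (opmult S d B C) c c'"
    by (simp add: opmult_def sum_distrib_left mult.assoc)
  finally show "opmult S d (opmult S d A B) C c c' = opmult S d A (opmult S d B C) c c'" .
qed

lemma is_op_opmult: "is_op S d A \<Longrightarrow> is_op S d B \<Longrightarrow> is_op S d (opmult S d A B)"
  by (auto simp: is_op_def opmult_def)

lemma opmult_opid_right: "is_op S d A \<Longrightarrow> finite S \<Longrightarrow> opmult S d A (opid S d) = A"
proof (rule ext, rule ext)
  fix c c' assume "is_op S d A" "finite S"
  then show "opmult S d A (opid S d) c c' = A c c'"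
    unfolding opmult_def opid_def is_op_def
    by (cases "c' \<in> cfgs S d") (auto simp: if_distrib finite_cfgs cong: if_cong)
qed

lemma opmult_opid_left: "is_op S d A \<Longrightarrow> finite S \<Longrightarrow> opmult S d (opid S d) A = A"
proof (rule ext, rule ext)
  fix c c' assume "is_op S d A" "finite S"
  have "(\<Sum>b\<in>cfgs S d. (if c \<in> cfgs S d \<and> c = b then 1 else 0) * A b c') = (\<Sum>b\<in>cfgs S d. if c = b then A c c' else 0)"
    by (rule sum.cong) auto
  then show "opmult S d (opid S d) A c c' = A c c'"
    using \<open>is_op S d A\<close> \<open>finite S\<close> unfolding opmult_def opid_def is_op_def
    by (cases "c \<in> cfgs S d") (auto simp: finite_cfgs)
qed

lemma is_op_opid: "is_op S d (opid S d)" by (auto simp: is_op_def opid_def)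
lemma is_op_tensor: "is_op S d (tensor S d M)" by (auto simp: is_op_def tensor_def)

lemma tensor_mult:
  assumes fS: "finite S"
  shows "opmult S d (tensor S d M1) (tensor S d M2) = tensor S d (\<lambda>x. matmul (d x) (M1 x) (M2 x))"
proof (rule ext, rule ext)
  fix c c'
  show "opmult S d (tensor S d M1) (tensor S d M2) c c' = tensor S d (\<lambda>x. matmul (d x) (M1 x) (M2 x)) c c'"
  proof (cases "c \<in> cfgs S d \<and> c' \<in> cfgs S d")
    case True
    have "opmult S d (tensor S d M1) (tensor S d M2) c c' =
       (\<Sum>b\<in>cfgs S d. \<Prod>x\<in>S. M1 x (c x) (b x) * M2 x (b x) (c' x))"
      using True by (auto simp: opmult_def tensor_def prod.distrib intro!: sum.cong)
    also have "\<dots> = (\<Prod>x\<in>S. \<Sum>k<d x. M1 x (c x) k * M2 x k (c' x))"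
      by (rule sum_cfgs_prod[OF fS, of "\<lambda>x k. M1 x (c x) k * M2 x k (c' x)"])
    finally show ?thesis using True by (simp add: tensor_def matmul_def)
  qed (auto simp: opmult_def tensor_def)
qed

lemma tensor_cong:
  assumes "\<And>x i j. x \<in> S \<Longrightarrow> i < d x \<Longrightarrow> j < d x \<Longrightarrow> M1 x i j = M2 x i j"
  shows "tensor S d M1 = tensor S d M2"
  using assms by (auto simp: tensor_def cfgs_def intro!: ext prod.cong)



definition agree :: "'s set \<Rightarrow> 's set \<Rightarrow> ('s \<Rightarrow> nat) \<Rightarrow> ('s \<Rightarrow> nat) \<Rightarrow> bool" where
  "agree S r c c' \<longleftrightarrow> (\<forall>x\<in>S - r. c x = c' x)"

definition loc :: "'s set \<Rightarrow> ('s \<Rightarrow> nat) \<Rightarrow> 's set \<Rightarrow> 's op \<Rightarrow> bool" where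
  "loc S d r A \<longleftrightarrow> is_op S d A \<and>
    (\<forall>c c'. c \<in> cfgs S d \<longrightarrow> c' \<in> cfgs S d \<longrightarrow> \<not> agree S r c c' \<longrightarrow> A c c' = 0) \<and>
    (\<forall>c c' c2 c2'. c \<in> cfgs S d \<longrightarrow> c' \<in> cfgs S d \<longrightarrow> c2 \<in> cfgs S d \<longrightarrow> c2' \<in> cfgs S d \<longrightarrow>
       agree S r c c' \<longrightarrow> agree S r c2 c2' \<longrightarrow> restr c r = restr c2 r \<longrightarrow> restr c' r = restr c2' r \<longrightarrow>
       A c c' = A c2 c2')"

lemma local_alg_loc: "A \<in> local_alg S d r \<Longrightarrow> loc S d r A"
  by (auto simp: local_alg_def loc_def is_op_def agree_def)

lemma loc_local_alg:
  assumes "loc S d r A" shows "A \<in> local_alg S d r"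
proof -
  let ?P = "\<lambda>a a' p. fst p \<in> cfgs S d \<and> snd p \<in> cfgs S d \<and> agree S r (fst p) (snd p) \<and>
       restr (fst p) r = a \<and> restr (snd p) r = a'"
  define Ar where "Ar = (\<lambda>a a'. if \<exists>p. ?P a a' p then A (fst (SOME p. ?P a a' p)) (snd (SOME p. ?P a a' p)) else 0)"
  have "A = (\<lambda>c c'. if c \<in> cfgs S d \<and> c' \<in> cfgs S d \<and> (\<forall>x\<in>S - r. c x = c' x)
       then Ar (restr c r) (restr c' r) else 0)"
  proof (rule ext, rule ext)
    fix c c'
    show "A c c' = (if c \<in> cfgs S d \<and> c' \<in> cfgs S d \<and> (\<forall>x\<in>S - r. c x = c' x)
       then Ar (restr c r) (restr c' r) else 0)"
    proof (cases "c \<in> cfgs S d \<and> c' \<in> cfgs S d \<and> agree S r c c'")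
      case True
      have ex: "\<exists>p. ?P (restr c r) (restr c' r) p" using True by (intro exI[of _ "(c,c')"]) auto
      then have "?P (restr c r) (restr c' r) (SOME p. ?P (restr c r) (restr c' r) p)" by (rule someI_ex)
      then show ?thesis using True assms ex unfolding loc_def Ar_def agree_def
        by (auto simp del: fst_conv snd_conv)
    next
      case False
      then have rhs: "(if c \<in> cfgs S d \<and> c' \<in> cfgs S d \<and> (\<forall>x\<in>S - r. c x = c' x)
       then Ar (restr c r) (restr c' r) else 0) = 0" using False unfolding agree_def by auto
      have "A c c' = 0"
      proof (cases "c \<in> cfgs S d \<and> c' \<in> cfgs S d")
        case True with False assms show ?thesis unfolding loc_def by blast
      next
        case False with assms show ?thesis unfolding loc_def is_op_def by blast
      qed
      then show ?thesis using rhs by simp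
    qed
  qed
  then show ?thesis unfolding local_alg_def by blast
qed

definition sw :: "nat \<Rightarrow> nat \<Rightarrow> nat \<Rightarrow> nat" where
  "sw a b y = (if y = a then b else if y = b then a else y)"

lemma sw_sw[simp]: "sw a b (sw a b y) = y" by (auto simp: sw_def)
lemma sw_eq_iff: "sw a b y = b \<longleftrightarrow> y = a" by (auto simp: sw_def)

lemma loc_zero: "loc S d r A \<Longrightarrow> c \<in> cfgs S d \<Longrightarrow> c' \<in> cfgs S d \<Longrightarrow> \<not> agree S r c c' \<Longrightarrow> A c c' = 0"
  unfolding loc_def by blast

lemma loc_inv: "loc S d r A \<Longrightarrow> c \<in> cfgs S d \<Longrightarrow> c' \<in> cfgs S d \<Longrightarrow> c2 \<in> cfgs S d \<Longrightarrow> c2' \<in> cfgs S d \<Longrightarrow>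
       agree S r c c' \<Longrightarrow> agree S r c2 c2' \<Longrightarrow> restr c r = restr c2 r \<Longrightarrow> restr c' r = restr c2' r \<Longrightarrow>
       A c c' = A c2 c2'"
  unfolding loc_def by blast

lemma loc_mult:
  assumes A: "loc S d r A" and B: "loc S d r B"
  shows "loc S d r (opmult S d A B)"
proof -
  have opA: "is_op S d A" and opB: "is_op S d B" using A B by (auto simp: loc_def)
  have z: "opmult S d A B c c' = 0" if c: "c \<in> cfgs S d" "c' \<in> cfgs S d" "\<not> agree S r c c'" for c c'
  proof -
    have "A c b * B b c' = 0" if "b \<in> cfgs S d" for b
    proof (cases "agree S r c b")
      case True
      then have "\<not> agree S r b c'" using c by (auto simp: agree_def)
      then show ?thesis using B c that by (auto simp: loc_def)
    next
      case False then show ?thesis using A c that by (auto simp: loc_def)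
    qed
    then show ?thesis by (auto simp: opmult_def intro!: sum.neutral)
  qed
  have inv: "opmult S d A B c c' = opmult S d A B c2 c2'"
    if cs: "c \<in> cfgs S d" "c' \<in> cfgs S d" "c2 \<in> cfgs S d" "c2' \<in> cfgs S d"
      and ag: "agree S r c c'" "agree S r c2 c2'" and rs: "restr c r = restr c2 r" "restr c' r = restr c2' r"
    for c c' c2 c2'
  proof -
    define \<sigma> where "\<sigma> = (\<lambda>b x. if x \<in> r then b x else sw (c x) (c2 x) (b x))"
    have \<sigma>\<sigma>: "\<sigma> (\<sigma> b) = b" for b by (auto simp: \<sigma>_def)
    have \<sigma>cf: "\<sigma> b \<in> cfgs S d" if "b \<in> cfgs S d" for b
      using that cs by (auto simp: \<sigma>_def cfgs_def sw_def)
    have rs\<sigma>: "restr (\<sigma> b) r = restr b r" for b by (auto simp: \<sigma>_def restr_def)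
    have pt: "x \<notin> r \<Longrightarrow> (c2 x = \<sigma> b x) = (c x = b x)" for b x
      by (auto simp: \<sigma>_def sw_def)
    have ag1: "agree S r c2 (\<sigma> b) \<longleftrightarrow> agree S r c b" for b
      unfolding agree_def using pt by auto
    have ag2: "agree S r (\<sigma> b) c2' \<longleftrightarrow> agree S r b c'" for b
      using ag by (auto simp: agree_def \<sigma>_def sw_def)
    have "opmult S d A B c2 c2' = (\<Sum>b\<in>cfgs S d. A c2 (\<sigma> b) * B (\<sigma> b) c2')"
      unfolding opmult_def
      by (rule sum.reindex_bij_witness[of _ \<sigma> \<sigma>]) (auto simp: \<sigma>\<sigma> \<sigma>cf)
    also have "\<dots> = (\<Sum>b\<in>cfgs S d. A c b * B b c')"
    proof (rule sum.cong[OF refl])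
      fix b assume b: "b \<in> cfgs S d"
      have "A c2 (\<sigma> b) = A c b"
      proof (cases "agree S r c b")
        case True
        show ?thesis
          by (rule sym, rule loc_inv[OF A cs(1) b cs(3) \<sigma>cf[OF b] True]) (use True ag1[of b] rs rs\<sigma>[of b] in auto)
      next
        case False
        then have "\<not> agree S r c2 (\<sigma> b)" using ag1[of b] by simp
        then show ?thesis using loc_zero[OF A cs(1) b False] loc_zero[OF A cs(3) \<sigma>cf[OF b]] by simp
      qed
      moreover have "B (\<sigma> b) c2' = B b c'"
      proof (cases "agree S r b c'")
        case True
        show ?thesis
          by (rule sym, rule loc_inv[OF B b cs(2) \<sigma>cf[OF b] cs(4) True]) (use True ag2[of b] rs rs\<sigma>[of b] in auto)
      next
        case False
        then have "\<not> agree S r (\<sigma> b) c2'" using ag2[of b] by simp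
        then show ?thesis using loc_zero[OF B b cs(2) False] loc_zero[OF B \<sigma>cf[OF b] cs(4)] by simp
      qed
      ultimately show "A c2 (\<sigma> b) * B (\<sigma> b) c2' = A c b * B b c'" by simp
    qed
    finally show ?thesis by (simp add: opmult_def)
  qed
  show ?thesis unfolding loc_def using is_op_opmult[OF opA opB] z inv by blast
qed

lemma agree_restr_eq:
  assumes "c \<in> cfgs S d" "c' \<in> cfgs S d" "agree S r c c'"
  shows "c = c' \<longleftrightarrow> restr c r = restr c' r"
proof
  assume "restr c r = restr c' r"
  then have "\<forall>x\<in>r. c x = c' x" by (metis restr_def)
  then show "c = c'" using assms by (auto simp: agree_def cfgs_def fun_eq_iff) (metis Diff_iff)
qed simp

lemma loc_opid: "loc S d r (opid S d)"
  unfolding loc_def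
proof (intro conjI allI impI)
  show "is_op S d (opid S d)" by (rule is_op_opid)
next
  fix c c' assume "c \<in> cfgs S d" "c' \<in> cfgs S d" "\<not> agree S r c c'"
  then show "opid S d c c' = 0" by (auto simp: opid_def agree_def)
next
  fix c c' c2 c2'
  assume h: "c \<in> cfgs S d" "c' \<in> cfgs S d" "c2 \<in> cfgs S d" "c2' \<in> cfgs S d"
    "agree S r c c'" "agree S r c2 c2'" "restr c r = restr c2 r" "restr c' r = restr c2' r"
  then have "c = c' \<longleftrightarrow> c2 = c2'" using agree_restr_eq by metis
  then show "opid S d c c' = opid S d c2 c2'" using h by (simp add: opid_def)
qed



definition meq :: "nat \<Rightarrow> (nat \<Rightarrow> nat \<Rightarrow> complex) \<Rightarrow> (nat \<Rightarrow> nat \<Rightarrow> complex) \<Rightarrow> bool" where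
  "meq n A B \<longleftrightarrow> (\<forall>i<n. \<forall>j<n. A i j = B i j)"

definition mcomm where "mcomm n A B \<longleftrightarrow> meq n (matmul n A B) (matmul n B A)"

lemma meq_refl[simp]: "meq n A A" by (simp add: meq_def)
lemma meq_sym: "meq n A B \<Longrightarrow> meq n B A" by (simp add: meq_def)
lemma meq_trans: "meq n A B \<Longrightarrow> meq n B C \<Longrightarrow> meq n A C" by (simp add: meq_def)

lemma mm_assoc: "matmul n (matmul n A B) C = matmul n A (matmul n B C)"
proof (rule ext, rule ext)
  fix i j
  have "matmul n (matmul n A B) C i j = (\<Sum>l<n. \<Sum>k<n. A i k * B k l * C l j)"
    by (simp add: matmul_def sum_distrib_right)
  also have "\<dots> = (\<Sum>k<n. \<Sum>l<n. A i k * B k l * C l j)"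
    by (rule sum.swap)
  also have "\<dots> = matmul n A (matmul n B C) i j"
    by (simp add: matmul_def sum_distrib_left mult.assoc)
  finally show "matmul n (matmul n A B) C i j = matmul n A (matmul n B C) i j" .
qed

lemma mm_cong: "meq n A A' \<Longrightarrow> meq n B B' \<Longrightarrow> meq n (matmul n A B) (matmul n A' B')"
  unfolding meq_def matmul_def by (auto intro!: sum.cong)

lemma mm_kd_left: "meq n (matmul n kd A) A"
proof -
  have "(\<Sum>k<n. kd i k * A k j) = (\<Sum>k<n. if i = k then A k j else 0)" for i j
    by (rule sum.cong) (auto simp: kd_def)
  then show ?thesis unfolding meq_def matmul_def by simp
qed

lemma mm_kd_right: "meq n (matmul n A kd) A"
proof -
  have "(\<Sum>k<n. A i k * kd k j) = (\<Sum>k<n. if k = j then A i k else 0)" for i j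
    by (rule sum.cong) (auto simp: kd_def)
  then show ?thesis unfolding meq_def matmul_def by simp
qed

lemma mcomm_sym: "mcomm n A B \<Longrightarrow> mcomm n B A" by (simp add: mcomm_def meq_def)

lemma mcomm_kd: "mcomm n kd A"
  unfolding mcomm_def by (rule meq_trans[OF mm_kd_left meq_sym[OF mm_kd_right]])

lemma mcomm_mult_right:
  assumes "mcomm n Y A" "mcomm n Y B" shows "mcomm n Y (matmul n A B)"
proof -
  have 1: "meq n (matmul n Y (matmul n A B)) (matmul n (matmul n A Y) B)"
    using mm_cong[OF assms(1)[unfolded mcomm_def] meq_refl[of n B]] by (simp add: mm_assoc)
  have 2: "meq n (matmul n (matmul n A Y) B) (matmul n A (matmul n B Y))"
    using mm_cong[OF meq_refl[of n A] assms(2)[unfolded mcomm_def]] by (simp add: mm_assoc)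
  show ?thesis using meq_trans[OF 1 2] by (simp add: mcomm_def mm_assoc)
qed



lemma mcomm_mult_left:
  assumes "mcomm n A Y" "mcomm n B Y" shows "mcomm n (matmul n A B) Y"
  using mcomm_mult_right[OF mcomm_sym[OF assms(1)] mcomm_sym[OF assms(2)]] by (rule mcomm_sym)

lemma mm_swap4:
  assumes "mcomm n b a'"
  shows "meq n (matmul n (matmul n a b) (matmul n a' b')) (matmul n (matmul n a a') (matmul n b b'))"
proof -
  have "meq n (matmul n (matmul n b a') b') (matmul n (matmul n a' b) b')"
    by (rule mm_cong[OF assms[unfolded mcomm_def] meq_refl])
  then have "meq n (matmul n a (matmul n (matmul n b a') b')) (matmul n a (matmul n (matmul n a' b) b'))"
    by (rule mm_cong[OF meq_refl])
  then show ?thesis by (simp add: mm_assoc)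
qed

lemma rep_meq: "unitary_rep G M n U \<Longrightarrow> g \<in> carrier G \<Longrightarrow> h \<in> carrier G \<Longrightarrow>
   meq n (matmul n (U g) (U h)) (U (g \<otimes>\<^bsub>G\<^esub> h))"
  by (auto simp: unitary_rep_def meq_def)

locale gsetup =
  fixes G :: "('g, 'b) monoid_scheme" and M :: "'g measure"
    and V :: "'v set" and E :: "'e set" and src tgt :: "'e \<Rightarrow> 'v"
    and d :: "'v + 'e \<Rightarrow> nat"
    and U :: "'v \<Rightarrow> 'g \<Rightarrow> nat \<Rightarrow> nat \<Rightarrow> complex"
    and L Rh :: "'e \<Rightarrow> 'g \<Rightarrow> nat \<Rightarrow> nat \<Rightarrow> complex"
  assumes grp: "group G"
    and haar: "haar_prob G M"
    and finV: "finite V" and finE: "finite E"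
    and edges: "\<forall>e\<in>E. src e \<in> V \<and> tgt e \<in> V"
    and repU: "\<forall>v\<in>V. unitary_rep G M (d (Inl v)) (U v)"
    and repL: "\<forall>e\<in>E. unitary_rep G M (d (Inr e)) (L e)"
    and repR: "\<forall>e\<in>E. unitary_rep G M (d (Inr e)) (Rh e)"
    and LR_comm: "\<forall>e\<in>E. \<forall>g\<in>carrier G. \<forall>h\<in>carrier G. \<forall>i<d (Inr e). \<forall>j<d (Inr e).
                    matmul (d (Inr e)) (L e g) (Rh e h) i j = matmul (d (Inr e)) (Rh e h) (L e g) i j"
begin

abbreviation "S \<equiv> sites V E"
abbreviation "gl \<equiv> gauge_local src tgt d U L Rh"
abbreviation "Aop \<equiv> gauge_op V E src tgt d U L Rh"
abbreviation "Pv \<equiv> Pi_v M V E src tgt d U L Rh"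

lemma finS: "finite S" using finV finE by (simp add: sites_def)

lemma LR_mcomm: "e \<in> E \<Longrightarrow> g \<in> carrier G \<Longrightarrow> h \<in> carrier G \<Longrightarrow> mcomm (d (Inr e)) (L e g) (Rh e h)"
  using LR_comm by (auto simp: mcomm_def meq_def)

lemma local_rep:
  assumes v: "v \<in> V" and g: "g \<in> carrier G" and h: "h \<in> carrier G" and x: "x \<in> S"
  shows "meq (d x) (matmul (d x) (gl v g x) (gl v h x)) (gl v (g \<otimes>\<^bsub>G\<^esub> h) x)"
proof (cases x)
  case (Inl w)
  show ?thesis
  proof (cases "w = v")
    case True
    then show ?thesis using Inl rep_meq[OF repU[rule_format, OF v] g h] by (simp add: gauge_local_def)
  next
    case False
    then show ?thesis using Inl mm_kd_left[of "d x" kd] by (simp add: gauge_local_def)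
  qed
next
  case (Inr e)
  then have e: "e \<in> E" using x by (auto simp: sites_def)
  let ?n = "d (Inr e)"
  define a where "a = (\<lambda>g. if src e = v then L e g else kd)"
  define b where "b = (\<lambda>g. if tgt e = v then Rh e g else kd)"
  have gl: "gl v k x = matmul ?n (a k) (b k)" for k using Inr by (simp add: gauge_local_def a_def b_def)
  have c: "mcomm ?n (b g) (a h)"
    using LR_mcomm[OF e h g] by (auto simp: a_def b_def mcomm_kd intro: mcomm_sym)
  have aa: "meq ?n (matmul ?n (a g) (a h)) (a (g \<otimes>\<^bsub>G\<^esub> h))"
    using rep_meq[OF repL[rule_format, OF e] g h] mm_kd_left[of ?n kd] by (auto simp: a_def)
  have bb: "meq ?n (matmul ?n (b g) (b h)) (b (g \<otimes>\<^bsub>G\<^esub> h))"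
    using rep_meq[OF repR[rule_format, OF e] g h] mm_kd_left[of ?n kd] by (auto simp: b_def)
  show ?thesis unfolding gl using Inr meq_trans[OF mm_swap4[OF c] mm_cong[OF aa bb]] by simp
qed

lemma local_comm:
  assumes vw: "v \<noteq> w" and g: "g \<in> carrier G" and h: "h \<in> carrier G" and x: "x \<in> S"
  shows "mcomm (d x) (gl v g x) (gl w h x)"
proof (cases x)
  case (Inl u)
  then show ?thesis using vw by (auto simp: gauge_local_def mcomm_kd intro: mcomm_sym)
next
  case (Inr e)
  then have e: "e \<in> E" using x by (auto simp: sites_def)
  let ?n = "d (Inr e)"
  define a where "a = (\<lambda>v g. if src e = v then L e g else kd)"
  define b where "b = (\<lambda>v g. if tgt e = v then Rh e g else kd)"
  have gl: "gl u k x = matmul ?n (a u k) (b u k)" for u k using Inr by (simp add: gauge_local_def a_def b_def)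
  have 1: "mcomm ?n (a v g) (a w h)" using vw by (auto simp: a_def mcomm_kd intro: mcomm_sym)
  have 2: "mcomm ?n (b v g) (b w h)" using vw by (auto simp: b_def mcomm_kd intro: mcomm_sym)
  have 3: "mcomm ?n (a v g) (b w h)" using LR_mcomm[OF e g h] by (auto simp: a_def b_def mcomm_kd intro: mcomm_sym)
  have 4: "mcomm ?n (b v g) (a w h)" using LR_mcomm[OF e h g] by (auto simp: a_def b_def mcomm_kd intro: mcomm_sym)
  show ?thesis unfolding gl using Inr
    by (simp add: mcomm_mult_left mcomm_mult_right 1 2 3 4)
qed

lemma meq_tensor:
  assumes "\<And>x. x \<in> S \<Longrightarrow> meq (d x) (M1 x) (M2 x)"
  shows "tensor S d M1 = tensor S d M2"
  by (rule tensor_cong) (use assms in \<open>auto simp: meq_def\<close>)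

lemma Aop_mult:
  assumes v: "v \<in> V" and g: "g \<in> carrier G" and h: "h \<in> carrier G"
  shows "opmult S d (Aop v g) (Aop v h) = Aop v (g \<otimes>\<^bsub>G\<^esub> h)"
  unfolding gauge_op_def tensor_mult[OF finS]
  by (rule meq_tensor) (use local_rep[OF v g h] in auto)

lemma Aop_comm:
  assumes vw: "v \<noteq> w" and g: "g \<in> carrier G" and h: "h \<in> carrier G"
  shows "opmult S d (Aop v g) (Aop w h) = opmult S d (Aop w h) (Aop v g)"
  unfolding gauge_op_def tensor_mult[OF finS]
  by (rule meq_tensor) (use local_comm[OF vw g h] in \<open>auto simp: mcomm_def\<close>)

end


lemma unitary_entry_bound:
  assumes u: "is_unitary n A" and i: "i < n" and j: "j < n"
  shows "norm (A i j) \<le> 1"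
proof -
  have "(\<Sum>k<n. cnj (A k j) * A k j) = 1" using u j by (auto simp: is_unitary_def kd_def)
  moreover have "cnj (A k j) * A k j = complex_of_real ((norm (A k j))\<^sup>2)" for k
    using complex_norm_square[of "A k j"] by (simp add: mult.commute)
  ultimately have "complex_of_real (\<Sum>k<n. (norm (A k j))\<^sup>2) = 1" by simp
  then have s: "(\<Sum>k<n. (norm (A k j))\<^sup>2) = 1" using of_real_eq_1_iff by blast
  have "(norm (A i j))\<^sup>2 \<le> (\<Sum>k<n. (norm (A k j))\<^sup>2)"
    by (rule member_le_sum) (use i in auto)
  then have "(norm (A i j))\<^sup>2 \<le> 1" using s by simp
  then show ?thesis using power2_le_imp_le[of "norm (A i j)" 1] by simp
qed

lemma rep_entry_bound: "unitary_rep G M n U \<Longrightarrow> g \<in> carrier G \<Longrightarrow> i < n \<Longrightarrow> j < n \<Longrightarrow> norm (U g i j) \<le> 1"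
  unfolding unitary_rep_def using unitary_entry_bound by blast

lemma kd_bound: "norm (kd i j) \<le> 1" by (simp add: kd_def)

lemma matmul_bound:
  assumes "\<And>k. k < n \<Longrightarrow> norm (A i k) \<le> 1" "\<And>k. k < n \<Longrightarrow> norm (B k j) \<le> 1"
  shows "norm (matmul n A B i j) \<le> real n"
proof -
  have "norm (matmul n A B i j) \<le> (\<Sum>k<n. norm (A i k * B k j))"
    unfolding matmul_def by (rule norm_sum)
  also have "\<dots> \<le> (\<Sum>k<n. 1)"
    by (rule sum_mono) (use assms in \<open>auto simp: norm_mult intro: mult_le_one\<close>)
  finally show ?thesis by simp
qed

context gsetup begin

lemma ps: "prob_space M" using haar by (simp add: haar_prob_def)
lemma spaceM: "space M = carrier G" using haar by (simp add: haar_prob_def)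

lemma gl_bound:
  assumes v: "v \<in> V" and g: "g \<in> carrier G" and x: "x \<in> S" and i: "i < d x" and j: "j < d x"
  shows "norm (gl v g x i j) \<le> real (d x) + 1"
proof (cases x)
  case (Inl w)
  have "norm (gl v g x i j) \<le> 1"
    using Inl rep_entry_bound[OF repU[rule_format, OF v] g] i j kd_bound by (auto simp: gauge_local_def)
  then show ?thesis by simp
next
  case (Inr e)
  then have e: "e \<in> E" using x by (auto simp: sites_def)
  have "norm (gl v g x i j) \<le> real (d x)"
    unfolding Inr gauge_local_def sum.case
    by (rule matmul_bound)
       (use i j Inr rep_entry_bound[OF repL[rule_format, OF e] g] rep_entry_bound[OF repR[rule_format, OF e] g] kd_bound
        in auto)
  then show ?thesis by simp
qed

lemma gl_meas:
  assumes v: "v \<in> V" and x: "x \<in> S"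
  shows "(\<lambda>g. gl v g x i j) \<in> borel_measurable M"
proof (cases x)
  case (Inl w)
  then show ?thesis using repU v by (cases "w = v") (auto simp: gauge_local_def unitary_rep_def)
next
  case (Inr e)
  then have e: "e \<in> E" using x by (auto simp: sites_def)
  have mL: "(\<lambda>g. L e g a b) \<in> borel_measurable M" for a b using repL e by (auto simp: unitary_rep_def)
  have mR: "(\<lambda>g. Rh e g a b) \<in> borel_measurable M" for a b using repR e by (auto simp: unitary_rep_def)
  show ?thesis unfolding Inr gauge_local_def sum.case matmul_def
    by (cases "src e = v"; cases "tgt e = v") (auto intro!: borel_measurable_sum borel_measurable_times simp: mL mR)
qed

lemma Aop_meas: "v \<in> V \<Longrightarrow> (\<lambda>g. Aop v g c c') \<in> borel_measurable M"
  unfolding gauge_op_def tensor_def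
  by (cases "c \<in> cfgs S d \<and> c' \<in> cfgs S d") (auto intro!: borel_measurable_prod gl_meas)

lemma Aop_int: assumes v: "v \<in> V" shows "integrable M (\<lambda>g. Aop v g c c')"
proof -
  interpret prob_space M by (rule ps)
  show ?thesis
  proof (rule integrable_const_bound[where B="\<Prod>x\<in>S. real (d x) + 1"])
    show "AE g in M. norm (Aop v g c c') \<le> (\<Prod>x\<in>S. real (d x) + 1)"
    proof (rule AE_I2)
      fix g assume "g \<in> space M"
      then have g: "g \<in> carrier G" by (simp add: spaceM)
      show "norm (Aop v g c c') \<le> (\<Prod>x\<in>S. real (d x) + 1)"
      proof (cases "c \<in> cfgs S d \<and> c' \<in> cfgs S d")
        case True
        have "norm (\<Prod>x\<in>S. gl v g x (c x) (c' x)) \<le> (\<Prod>x\<in>S. real (d x) + 1)"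
          unfolding prod_norm[symmetric]
          by (rule prod_mono) (use True gl_bound[OF v g] in \<open>auto simp: cfgs_def\<close>)
        then show ?thesis using True by (simp add: gauge_op_def tensor_def)
      next
        case False
        then show ?thesis by (auto simp: gauge_op_def tensor_def prod_nonneg)
      qed
    qed
  qed (rule Aop_meas[OF v])
qed

end


lemma loc_tensor:
  assumes fS: "finite S" and kdo: "\<And>x. x \<in> S - r \<Longrightarrow> meq (d x) (Mx x) kd"
  shows "loc S d r (tensor S d Mx)"
  unfolding loc_def
proof (intro conjI allI impI)
  show "is_op S d (tensor S d Mx)" by (rule is_op_tensor)
next
  fix c c' assume c: "c \<in> cfgs S d" "c' \<in> cfgs S d" and na: "\<not> agree S r c c'"
  then obtain x where x: "x \<in> S - r" "c x \<noteq> c' x" by (auto simp: agree_def)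
  then have "Mx x (c x) (c' x) = 0" using kdo[OF x(1)] c by (auto simp: meq_def cfgs_def kd_def)
  then have "(\<Prod>x\<in>S. Mx x (c x) (c' x)) = 0" using fS x by (auto intro: prod_zero)
  then show "tensor S d Mx c c' = 0" by (simp add: tensor_def)
next
  fix c c' c2 c2'
  assume cs: "c \<in> cfgs S d" "c' \<in> cfgs S d" "c2 \<in> cfgs S d" "c2' \<in> cfgs S d"
    and ag: "agree S r c c'" "agree S r c2 c2'" and rs: "restr c r = restr c2 r" "restr c' r = restr c2' r"
  have "(\<Prod>x\<in>S. Mx x (c x) (c' x)) = (\<Prod>x\<in>S. Mx x (c2 x) (c2' x))"
  proof (rule prod.cong[OF refl])
    fix x assume x: "x \<in> S"
    show "Mx x (c x) (c' x) = Mx x (c2 x) (c2' x)"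
    proof (cases "x \<in> r")
      case True
      then have "c x = c2 x" "c' x = c2' x" using rs by (metis restr_def)+
      then show ?thesis by simp
    next
      case False
      then have xx: "x \<in> S - r" using x by simp
      then show ?thesis using kdo[OF xx] ag cs by (auto simp: meq_def cfgs_def kd_def agree_def)
    qed
  qed
  then show "tensor S d Mx c c' = tensor S d Mx c2 c2'" using cs by (simp add: tensor_def)
qed

lemma loc_int:
  assumes "\<And>g. g \<in> space M \<Longrightarrow> loc S d r (F g)"
  shows "loc S d r (\<lambda>c c'. LINT g|M. F g c c')"
  unfolding loc_def
proof (intro conjI allI impI)
  show "is_op S d (\<lambda>c c'. LINT g|M. F g c c')"
    unfolding is_op_def
  proof (intro allI impI)
    fix c c' assume h: "c \<notin> cfgs S d \<or> c' \<notin> cfgs S d"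
    have "(LINT g|M. F g c c') = (LINT g|M. 0)"
      by (rule Bochner_Integration.integral_cong[OF refl]) (use assms h in \<open>auto simp: loc_def is_op_def\<close>)
    then show "(LINT g|M. F g c c') = 0" by simp
  qed
next
  fix c c' assume h: "c \<in> cfgs S d" "c' \<in> cfgs S d" "\<not> agree S r c c'"
  have "(LINT g|M. F g c c') = (LINT g|M. 0)"
    by (rule Bochner_Integration.integral_cong[OF refl]) (use loc_zero[OF assms h] in simp)
  then show "(LINT g|M. F g c c') = 0" by simp
next
  fix c c' c2 c2'
  assume h: "c \<in> cfgs S d" "c' \<in> cfgs S d" "c2 \<in> cfgs S d" "c2' \<in> cfgs S d"
    "agree S r c c'" "agree S r c2 c2'" "restr c r = restr c2 r" "restr c' r = restr c2' r"
  show "(LINT g|M. F g c c') = (LINT g|M. F g c2 c2')"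
    by (rule Bochner_Integration.integral_cong[OF refl]) (use loc_inv[OF assms h] in simp)
qed

lemma int_left:
  assumes "\<And>b c'. integrable M (\<lambda>g. F g b c')"
  shows "opmult S d X (\<lambda>c c'. LINT g|M. F g c c') = (\<lambda>c c'. LINT g|M. opmult S d X (F g) c c')"
proof (rule ext, rule ext)
  fix c c'
  have "integral\<^sup>L M (\<lambda>g. \<Sum>b\<in>cfgs S d. X c b * F g b c') = (\<Sum>b\<in>cfgs S d. integral\<^sup>L M (\<lambda>g. X c b * F g b c'))"
    by (rule Bochner_Integration.integral_sum) (use assms in auto)
  then show "opmult S d X (\<lambda>c c'. LINT g|M. F g c c') c c' = (LINT g|M. opmult S d X (F g) c c')"
    by (simp add: opmult_def)
qed

lemma int_right:
  assumes "\<And>b c'. integrable M (\<lambda>g. F g b c')"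
  shows "opmult S d (\<lambda>c c'. LINT g|M. F g c c') X = (\<lambda>c c'. LINT g|M. opmult S d (F g) X c c')"
proof (rule ext, rule ext)
  fix c c'
  have "integral\<^sup>L M (\<lambda>g. \<Sum>b\<in>cfgs S d. F g c b * X b c') = (\<Sum>b\<in>cfgs S d. integral\<^sup>L M (\<lambda>g. F g c b * X b c'))"
    by (rule Bochner_Integration.integral_sum) (use assms in auto)
  then show "opmult S d (\<lambda>c c'. LINT g|M. F g c c') X c c' = (LINT g|M. opmult S d (F g) X c c')"
    by (simp add: opmult_def)
qed

context gsetup begin

lemma Pv_def': "Pv v = (\<lambda>c c'. LINT g|M. Aop v g c c')"
  by (simp add: Pi_v_def)

lemma left_inv:
  fixes f :: "'g \<Rightarrow> complex"
  assumes g: "g \<in> carrier G" and f: "f \<in> borel_measurable M"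
  shows "(LINT h|M. f (g \<otimes>\<^bsub>G\<^esub> h)) = (LINT h|M. f h)"
proof -
  have m: "(\<lambda>h. g \<otimes>\<^bsub>G\<^esub> h) \<in> M \<rightarrow>\<^sub>M M" and dM: "distr M M (\<lambda>h. g \<otimes>\<^bsub>G\<^esub> h) = M"
    using haar g by (auto simp: haar_prob_def)
  show ?thesis using integral_distr[OF m f] dM by simp
qed

lemma Pv_idem:
  assumes v: "v \<in> V" shows "opmult S d (Pv v) (Pv v) = Pv v"
proof -
  interpret prob_space M by (rule ps)
  have step: "opmult S d (Aop v g) (Pv v) c c' = Pv v c c'" if g: "g \<in> carrier G" for g c c'
  proof -
    have "opmult S d (Aop v g) (Pv v) c c' = (LINT h|M. opmult S d (Aop v g) (Aop v h) c c')"
      unfolding Pv_def' int_left[where F="Aop v", OF Aop_int[OF v]] ..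
    also have "\<dots> = (LINT h|M. Aop v (g \<otimes>\<^bsub>G\<^esub> h) c c')"
      by (rule Bochner_Integration.integral_cong[OF refl]) (simp add: Aop_mult[OF v g] spaceM)
    also have "\<dots> = (LINT h|M. Aop v h c c')"
      by (rule left_inv[OF g Aop_meas[OF v]])
    finally show ?thesis by (simp add: Pv_def')
  qed
  show ?thesis
  proof (rule ext, rule ext)
    fix c c'
    have "opmult S d (Pv v) (Pv v) c c' = (LINT g|M. opmult S d (Aop v g) (Pv v) c c')"
      unfolding Pv_def'[of v] int_right[where F="Aop v", OF Aop_int[OF v]] by (simp add: Pv_def')
    also have "\<dots> = (LINT g|M. Pv v c c')"
      by (rule Bochner_Integration.integral_cong[OF refl]) (simp add: step spaceM)
    also have "\<dots> = Pv v c c'" using prob_space by simp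
    finally show "opmult S d (Pv v) (Pv v) c c' = Pv v c c'" .
  qed
qed

lemma Pv_comm:
  assumes v: "v \<in> V" and w: "w \<in> V" shows "opmult S d (Pv v) (Pv w) = opmult S d (Pv w) (Pv v)"
proof (cases "v = w")
  case True then show ?thesis by simp
next
  case vw: False
  have step: "opmult S d (Aop v g) (Pv w) = opmult S d (Pv w) (Aop v g)" if g: "g \<in> carrier G" for g
  proof -
    have "opmult S d (Aop v g) (Pv w) = (\<lambda>c c'. LINT h|M. opmult S d (Aop v g) (Aop w h) c c')"
      unfolding Pv_def' int_left[where F="Aop w", OF Aop_int[OF w]] ..
    also have "\<dots> = (\<lambda>c c'. LINT h|M. opmult S d (Aop w h) (Aop v g) c c')"
      by (intro ext Bochner_Integration.integral_cong[OF refl]) (simp add: Aop_comm[OF vw g] spaceM)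
    also have "\<dots> = opmult S d (Pv w) (Aop v g)"
      unfolding Pv_def' int_right[where F="Aop w", OF Aop_int[OF w]] ..
    finally show ?thesis .
  qed
  have "opmult S d (Pv v) (Pv w) = (\<lambda>c c'. LINT g|M. opmult S d (Aop v g) (Pv w) c c')"
    unfolding Pv_def'[of v] int_right[where F="Aop v", OF Aop_int[OF v]] ..
  also have "\<dots> = (\<lambda>c c'. LINT g|M. opmult S d (Pv w) (Aop v g) c c')"
    by (intro ext Bochner_Integration.integral_cong[OF refl]) (simp add: step spaceM)
  also have "\<dots> = opmult S d (Pv w) (Pv v)"
    unfolding Pv_def'[of v] int_left[where F="Aop v", OF Aop_int[OF v]] ..
  finally show ?thesis .
qed

lemma is_op_Pv: "is_op S d (Pv v)"
  unfolding Pv_def' is_op_def gauge_op_def tensor_def by auto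

lemma loc_Pv:
  assumes v: "v \<in> V_r V E src tgt r"
  shows "loc S d r (Pv v)"
  unfolding Pv_def'
proof (rule loc_int)
  fix g
  show "loc S d r (Aop v g)"
    unfolding gauge_op_def
  proof (rule loc_tensor[OF finS])
    fix x assume x: "x \<in> S - r"
    show "meq (d x) (gl v g x) kd"
    proof (cases x)
      case (Inl w)
      then have "w \<noteq> v" using v x by (auto simp: V_r_def)
      then show ?thesis using Inl by (simp add: gauge_local_def)
    next
      case (Inr e)
      then have "e \<in> E" using x by (auto simp: sites_def)
      then have "src e \<noteq> v" "tgt e \<noteq> v" using v x Inr by (auto simp: V_r_def)
      then show ?thesis using Inr mm_kd_left[of "d x" kd] by (simp add: gauge_local_def)
    qed
  qed
qed

end


context gsetup begin

abbreviation "OP xs \<equiv> oprod S d (map Pv xs)"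

lemma is_op_OP: "is_op S d (OP xs)"
  by (induction xs) (auto simp: is_op_opid is_op_opmult is_op_Pv)

lemma comm1:
  assumes v: "v \<in> V" and xs: "set xs \<subseteq> V"
  shows "opmult S d (Pv v) (OP xs) = opmult S d (OP xs) (Pv v)"
  using xs
proof (induction xs)
  case Nil
  then show ?case by (simp add: opmult_opid_right opmult_opid_left is_op_Pv finS)
next
  case (Cons y ys)
  then have y: "y \<in> V" and ys: "set ys \<subseteq> V" by auto
  have "opmult S d (Pv v) (OP (y # ys)) = opmult S d (opmult S d (Pv v) (Pv y)) (OP ys)"
    by (simp add: opmult_assoc)
  also have "\<dots> = opmult S d (Pv y) (opmult S d (Pv v) (OP ys))"
    by (simp add: Pv_comm[OF v y] opmult_assoc)
  also have "\<dots> = opmult S d (OP (y # ys)) (Pv v)"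
    by (simp add: Cons.IH[OF ys] opmult_assoc)
  finally show ?case .
qed

lemma absorb1:
  assumes v: "v \<in> set xs" and xs: "set xs \<subseteq> V"
  shows "opmult S d (Pv v) (OP xs) = OP xs"
  using v xs
proof (induction xs)
  case Nil then show ?case by simp
next
  case (Cons y ys)
  then have y: "y \<in> V" and ys: "set ys \<subseteq> V" and vV: "v \<in> V" by auto
  show ?case
  proof (cases "v = y")
    case True
    have "opmult S d (Pv v) (OP (y # ys)) = opmult S d (opmult S d (Pv v) (Pv v)) (OP ys)"
      using True by (simp add: opmult_assoc)
    then show ?thesis using True Pv_idem[OF vV] by simp
  next
    case False
    then have vys: "v \<in> set ys" using Cons.prems by simp
    have "opmult S d (Pv v) (OP (y # ys)) = opmult S d (opmult S d (Pv v) (Pv y)) (OP ys)"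
      by (simp add: opmult_assoc)
    also have "\<dots> = opmult S d (Pv y) (opmult S d (Pv v) (OP ys))"
      by (simp add: Pv_comm[OF vV y] opmult_assoc)
    also have "\<dots> = OP (y # ys)" by (simp add: Cons.IH[OF vys ys])
    finally show ?thesis .
  qed
qed

lemma absorb:
  assumes ws: "set ws \<subseteq> set xs" and xs: "set xs \<subseteq> V"
  shows "opmult S d (OP ws) (OP xs) = OP xs"
  using ws
proof (induction ws)
  case Nil then show ?case by (simp add: opmult_opid_left is_op_OP finS)
next
  case (Cons w ws)
  then have w: "w \<in> set xs" and ws': "set ws \<subseteq> set xs" by auto
  have "opmult S d (OP (w # ws)) (OP xs) = opmult S d (Pv w) (opmult S d (OP ws) (OP xs))"
    by (simp add: opmult_assoc)
  also have "\<dots> = OP xs" by (simp add: Cons.IH[OF ws'] absorb1[OF w xs])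
  finally show ?case .
qed

lemma commL:
  assumes ws: "set ws \<subseteq> V" and xs: "set xs \<subseteq> V"
  shows "opmult S d (OP ws) (OP xs) = opmult S d (OP xs) (OP ws)"
  using ws
proof (induction ws)
  case Nil then show ?case by (simp add: opmult_opid_left opmult_opid_right is_op_OP finS)
next
  case (Cons w ws)
  then have w: "w \<in> V" and ws': "set ws \<subseteq> V" by auto
  have "opmult S d (OP (w # ws)) (OP xs) = opmult S d (Pv w) (opmult S d (OP xs) (OP ws))"
    by (simp add: opmult_assoc Cons.IH[OF ws'])
  also have "\<dots> = opmult S d (opmult S d (OP xs) (Pv w)) (OP ws)"
    by (simp add: opmult_assoc[symmetric] comm1[OF w xs])
  also have "\<dots> = opmult S d (OP xs) (OP (w # ws))"
    by (simp add: opmult_assoc)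
  finally show ?case .
qed

lemma locOP:
  assumes "set ws \<subseteq> V_r V E src tgt r"
  shows "loc S d r (OP ws)"
  using assms
  by (induction ws) (auto simp: loc_opid intro!: loc_mult loc_Pv)

end


theorem lemma3:
  fixes G :: "('g, 'b) monoid_scheme" and M :: "'g measure"
    and V :: "'v set" and E :: "'e set" and src tgt :: "'e \<Rightarrow> 'v"
    and d :: "'v + 'e \<Rightarrow> nat"
    and U :: "'v \<Rightarrow> 'g \<Rightarrow> nat \<Rightarrow> nat \<Rightarrow> complex"
    and L Rh :: "'e \<Rightarrow> 'g \<Rightarrow> nat \<Rightarrow> nat \<Rightarrow> complex"
    and vs :: "'v list" and r :: "('v + 'e) set"
  assumes grp: "group G"
    and haar: "haar_prob G M"
    and finV: "finite V" and finE: "finite E"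
    and edges: "\<forall>e\<in>E. src e \<in> V \<and> tgt e \<in> V"
    and repU: "\<forall>v\<in>V. unitary_rep G M (d (Inl v)) (U v)"
    and repL: "\<forall>e\<in>E. unitary_rep G M (d (Inr e)) (L e)"
    and repR: "\<forall>e\<in>E. unitary_rep G M (d (Inr e)) (Rh e)"
    and LR_comm: "\<forall>e\<in>E. \<forall>g\<in>carrier G. \<forall>h\<in>carrier G. \<forall>i<d (Inr e). \<forall>j<d (Inr e).
                    matmul (d (Inr e)) (L e g) (Rh e h) i j = matmul (d (Inr e)) (Rh e h) (L e g) i j"
    and vs: "distinct vs" "set vs = V"
    and r: "r \<subseteq> sites V E"
  shows
   "(let S = sites V E;
         Pi = Pi_v M V E src tgt d U L Rh;
         PiGI = oprod S d (map Pi vs);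
         PiVr = oprod S d (map Pi (filter (\<lambda>v. v \<in> V_r V E src tgt r) vs));
         Ar = local_alg S d r;
         Ahat = {opmult S d (opmult S d PiVr B) PiVr | B. B \<in> Ar}
     in {opmult S d B PiGI | B. B \<in> Ar \<and> opmult S d B PiGI = opmult S d PiGI B}
      = {opmult S d X PiGI | X. X \<in> Ahat \<and> opmult S d X PiGI = opmult S d PiGI X})"
proof -
  interpret gsetup G M V E src tgt d U L Rh
    unfolding gsetup_def using assms by auto
  let ?m = "opmult S d"
  define P where "P = OP vs"
  define Q where "Q = OP (filter (\<lambda>v. v \<in> V_r V E src tgt r) vs)"
  have vsV: "set vs \<subseteq> V" using vs by simp
  have fV: "set (filter (\<lambda>v. v \<in> V_r V E src tgt r) vs) \<subseteq> V" using vs by auto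
  have QP: "?m Q P = P" unfolding P_def Q_def by (rule absorb) (use vsV in auto)
  have PQ: "?m P Q = P" unfolding P_def Q_def using commL[OF fV vsV] QP by (simp add: P_def Q_def)
  have Qloc: "Q \<in> local_alg S d r" unfolding Q_def by (rule loc_local_alg, rule locOP) auto
  have mulA: "?m A B \<in> local_alg S d r" if "A \<in> local_alg S d r" "B \<in> local_alg S d r" for A B
    by (rule loc_local_alg, rule loc_mult) (use that local_alg_loc in auto)
  have eq1: "?m (?m (?m Q B) Q) P = ?m B P" and eq2: "?m P (?m (?m Q B) Q) = ?m B P"
    if BP: "?m B P = ?m P B" for B
  proof -
    have "?m (?m (?m Q B) Q) P = ?m Q (?m B (?m Q P))" by (simp add: opmult_assoc)
    also have "\<dots> = ?m (?m Q P) B" by (simp add: QP BP flip: opmult_assoc)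
    also have "\<dots> = ?m B P" by (simp add: QP BP)
    finally show "?m (?m (?m Q B) Q) P = ?m B P" .
    have "?m P (?m (?m Q B) Q) = ?m (?m (?m P Q) B) Q" by (simp add: opmult_assoc)
    also have "\<dots> = ?m (?m P B) Q" by (simp add: PQ)
    also have "\<dots> = ?m (?m B P) Q" by (simp add: BP)
    also have "\<dots> = ?m B (?m P Q)" by (simp only: opmult_assoc)
    also have "\<dots> = ?m B P" by (simp add: PQ)
    finally show "?m P (?m (?m Q B) Q) = ?m B P" .
  qed
  show ?thesis unfolding Let_def P_def[symmetric] Q_def[symmetric]
  proof (rule equalityI; rule subsetI)
    fix x assume "x \<in> {?m B P |B. B \<in> local_alg S d r \<and> ?m B P = ?m P B}"
    then obtain B where x: "x = ?m B P" and B: "B \<in> local_alg S d r" and BP: "?m B P = ?m P B" by blast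
    let ?X = "?m (?m Q B) Q"
    have "?X \<in> {?m (?m Q B) Q |B. B \<in> local_alg S d r}" using B by blast
    moreover have "x = ?m ?X P" "?m ?X P = ?m P ?X" using eq1[OF BP] eq2[OF BP] x by auto
    ultimately show "x \<in> {?m X P |X. X \<in> {?m (?m Q B) Q |B. B \<in> local_alg S d r} \<and> ?m X P = ?m P X}"
      by blast
  next
    fix x assume "x \<in> {?m X P |X. X \<in> {?m (?m Q B) Q |B. B \<in> local_alg S d r} \<and> ?m X P = ?m P X}"
    then obtain X B where x: "x = ?m X P" and X: "X = ?m (?m Q B) Q" and B: "B \<in> local_alg S d r"
      and XP: "?m X P = ?m P X" by blast
    have "X \<in> local_alg S d r" unfolding X by (intro mulA Qloc B)
    then show "x \<in> {?m B P |B. B \<in> local_alg S d r \<and> ?m B P = ?m P B}" using x XP by blast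
  qed
qed



end
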